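(* Let $U\in\mathcal U_n$ and let $U'\in\mathcal U_{n+1}$ be obtained from $U$ by adding an $(n+1)$-st unit interval $I_{n+1}$ to the right of the intervals of $U$. Then the Dyck path $p(U')$ is obtained from $p(U)$ by adding a final maximal peak.
   Context: A unit interval order on $\{1,\dots,n\}$ is given by closed intervals $I_1,\dots,I_n$ of length $1$ in $\mathbb R$, numbered from left to right, with $i\prec j$ iff $I_i$ lies strictly to the left of $I_j$; $\mathcal U_n$ is the set of these. "Adding an interval to the right" means $I_{n+1}$ is a unit interval placed so that $I_1,\dots,I_{n+1}$ are still numbered from left to right. A Dyck path of length $n$ is a lattice path from $(0,0)$ to $(n,n)$ with up steps $a$ and right steps $b$ never going below $y=x$; its area sequence lists row by row from bottom to top the number of unit boxes between path and diagonal. For a nonnegative integer sequence $w=(w_1,\dots,w_n)$, $P(w)$ is the poset on $\{1,\dots,n\}$ with $i\prec j$ iff $w_j-w_i\ge2$, or $w_j-w_i=1$ and $i<j$. For each $U\in\mathcal U_n$ there is a unique $w$ that is the area sequence of a Dyck path with $P(w)$ isomorphic to $U$; $p(U)$ is the Dyck path with this area sequence. A peak is an up step immediately followed by a right step (a factor $ab$); adding a peak means inserting the factor $ab$ somewhere into the word of the path. A peak is maximal if the top of its up step lies on the highest line of slope $1$ touching the path; the final maximal peak is the last maximal peak of the path. "Adding a final maximal peak" means the inserted peak is the final maximal peak of the resulting path. *)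

theory Defs
  imports Complex_Main
begin

(* Steps of a lattice path: A = up step a, B = right step b *)
datatype step = A | B

definition cntA :: "step list \<Rightarrow> nat" where
  "cntA w = length (filter (\<lambda>s. s = A) w)"

definition cntB :: "step list \<Rightarrow> nat" where
  "cntB w = length (filter (\<lambda>s. s = B) w)"

definition dyck :: "nat \<Rightarrow> step list \<Rightarrow> bool" where
  "dyck n d \<longleftrightarrow> cntA d = n \<and> cntB d = n \<and>
     (\<forall>k \<le> length d. cntB (take k d) \<le> cntA (take k d))"

(* area sequence: the i-th up step (row i) starts at x = number of right steps before it,
   row i contributes (i-1) - x boxes between path and diagonal *)
fun area_from :: "nat \<Rightarrow> nat \<Rightarrow> step list \<Rightarrow> nat list" where
  "area_from u r [] = []"
| "area_from u r (A # w) = (u - r) # area_from (Suc u) r w"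
| "area_from u r (B # w) = area_from u (Suc r) w"

definition area :: "step list \<Rightarrow> nat list" where
  "area d = area_from 0 0 d"

definition Pw :: "nat list \<Rightarrow> nat \<Rightarrow> nat \<Rightarrow> bool" where
  "Pw w i j \<longleftrightarrow> i \<in> {1..length w} \<and> j \<in> {1..length w} \<and>
     (int (w ! (j - 1)) - int (w ! (i - 1)) \<ge> 2 \<or>
      (int (w ! (j - 1)) - int (w ! (i - 1)) = 1 \<and> i < j))"

(* the unit interval order on {1..n} given by unit intervals [x i, x i + 1] *)
definition uio :: "(nat \<Rightarrow> real) \<Rightarrow> nat \<Rightarrow> nat \<Rightarrow> nat \<Rightarrow> bool" where
  "uio x n i j \<longleftrightarrow> i \<in> {1..n} \<and> j \<in> {1..n} \<and> x i + 1 < x j"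

definition iso_on :: "nat \<Rightarrow> (nat \<Rightarrow> nat \<Rightarrow> bool) \<Rightarrow> (nat \<Rightarrow> nat \<Rightarrow> bool) \<Rightarrow> bool" where
  "iso_on n R S \<longleftrightarrow> (\<exists>f. bij_betw f {1..n} {1..n} \<and>
     (\<forall>i\<in>{1..n}. \<forall>j\<in>{1..n}. R i j \<longleftrightarrow> S (f i) (f j)))"

definition pU :: "nat \<Rightarrow> (nat \<Rightarrow> nat \<Rightarrow> bool) \<Rightarrow> step list" where
  "pU n U = (THE d. dyck n d \<and> iso_on n (Pw (area d)) U)"

definition diag_level :: "step list \<Rightarrow> nat \<Rightarrow> int" where
  "diag_level d k = int (cntA (take k d)) - int (cntB (take k d))"

(* the highest line of slope 1 touching the path: y - x = max_level *)
definition max_level :: "step list \<Rightarrow> int" where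
  "max_level d = Max (diag_level d ` {0..length d})"

definition is_peak :: "step list \<Rightarrow> nat \<Rightarrow> bool" where
  "is_peak d k \<longleftrightarrow> Suc k < length d \<and> d ! k = A \<and> d ! Suc k = B"

(* maximal peak: top of its up step (point after k+1 steps) lies on the highest line *)
definition is_max_peak :: "step list \<Rightarrow> nat \<Rightarrow> bool" where
  "is_max_peak d k \<longleftrightarrow> is_peak d k \<and> diag_level d (Suc k) = max_level d"

definition is_final_max_peak :: "step list \<Rightarrow> nat \<Rightarrow> bool" where
  "is_final_max_peak d k \<longleftrightarrow> is_max_peak d k \<and> (\<forall>k'. is_max_peak d k' \<longrightarrow> k' \<le> k)"

definition add_final_max_peak :: "step list \<Rightarrow> step list \<Rightarrow> bool" where
  "add_final_max_peak d d' \<longleftrightarrow>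
     (\<exists>u v. d = u @ v \<and> d' = u @ [A, B] @ v \<and> is_final_max_peak d' (length u))"

end

theory Submission
  imports Defs "HOL-Library.Multiset" "HOL-Library.Product_Lexorder"
begin

lemma cntA_simps[simp]: "cntA [] = 0" "cntA (A#w) = Suc (cntA w)" "cntA (B#w) = cntA w"
  "cntA (xs@ys) = cntA xs + cntA ys"
  by (auto simp: cntA_def)
lemma cntB_simps[simp]: "cntB [] = 0" "cntB (B#w) = Suc (cntB w)" "cntB (A#w) = cntB w"
  "cntB (xs@ys) = cntB xs + cntB ys"
  by (auto simp: cntB_def)

lemma cnt_len: "length w = cntA w + cntB w"
  by (induction w) (auto, case_tac a, auto)

lemma cntA_take_mono: "p \<le> q \<Longrightarrow> cntA (take p w) \<le> cntA (take q w)"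
proof -
  assume "p \<le> q"
  then have "take q w = take p w @ take (q - p) (drop p w)"
    by (metis le_add_diff_inverse take_add)
  then show ?thesis by (metis cntA_simps(4) le_add1)
qed

lemma cntB_take_mono: "p \<le> q \<Longrightarrow> cntB (take p w) \<le> cntB (take q w)"
proof -
  assume "p \<le> q"
  then have "take q w = take p w @ take (q - p) (drop p w)"
    by (metis le_add_diff_inverse take_add)
  then show ?thesis by (metis cntB_simps(4) le_add1)
qed

lemma take_Suc_nth: "p < length w \<Longrightarrow> take (Suc p) w = take p w @ [w ! p]"
  by (simp add: take_Suc_conv_app_nth)

lemma length_area_from[simp]: "length (area_from u r w) = cntA w"
  by (induction u r w rule: area_from.induct) auto

lemma area_from_shift: "area_from (Suc u) (Suc r) w = area_from u r w"
  by (induction w arbitrary: u r) (auto, case_tac a, auto)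

lemma area_from_append:
  "area_from u r (xs @ ys) = area_from u r xs @ area_from (u + cntA xs) (r + cntB xs) ys"
  by (induction u r xs rule: area_from.induct) auto

definition insl :: "nat \<Rightarrow> nat \<Rightarrow> nat list \<Rightarrow> nat list" where
  "insl k h w = take k w @ h # drop k w"

lemma area_ins:
  "area (take p e @ [A,B] @ drop p e) =
     insl (cntA (take p e)) (cntA (take p e) - cntB (take p e)) (area e)"
proof -
  let ?k = "cntA (take p e)" and ?b = "cntB (take p e)"
  have e: "area e = area_from 0 0 (take p e) @ area_from ?k ?b (drop p e)"
    unfolding area_def by (metis append_take_drop_id area_from_append add_0)
  have "area (take p e @ [A,B] @ drop p e) =
      area_from 0 0 (take p e) @ (?k - ?b) # area_from (Suc ?k) (Suc ?b) (drop p e)"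
    unfolding area_def by (simp add: area_from_append)
  also have "\<dots> = area_from 0 0 (take p e) @ (?k - ?b) # area_from ?k ?b (drop p e)"
    by (simp add: area_from_shift)
  finally show ?thesis using e by (simp add: insl_def)
qed

lemma area_at_pos:
  "pos < length e \<Longrightarrow> e ! pos = A \<Longrightarrow>
    area_from u r e ! cntA (take pos e) = (u + cntA (take pos e)) - (r + cntB (take pos e))
    \<and> cntA (take pos e) < cntA e"
proof (induction e arbitrary: u r pos)
  case Nil then show ?case by simp
next
  case (Cons a e)
  show ?case
  proof (cases pos)
    case 0 then show ?thesis using Cons by auto
  next
    case (Suc q)
    then show ?thesis using Cons.IH[of q] Cons.prems by (cases a) auto
  qed
qed

lemma row_pos: "j < cntA e \<Longrightarrow> \<exists>pos<length e. e ! pos = A \<and> cntA (take pos e) = j"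
proof (induction e arbitrary: j)
  case Nil then show ?case by simp
next
  case (Cons a e)
  show ?case
  proof (cases a)
    case A
    show ?thesis
    proof (cases j)
      case 0 then show ?thesis using A by (intro exI[of _ 0]) auto
    next
      case (Suc j')
      then obtain pos where "pos < length e" "e ! pos = A" "cntA (take pos e) = j'"
        using Cons A by auto
      then show ?thesis using A Suc by (intro exI[of _ "Suc pos"]) auto
    qed
  next
    case B
    then obtain pos where "pos < length e" "e ! pos = A" "cntA (take pos e) = j"
      using Cons by auto
    then show ?thesis using B by (intro exI[of _ "Suc pos"]) auto
  qed
qed

lemma area_head: "area_from u r e \<noteq> [] \<Longrightarrow> area_from u r e ! 0 \<le> u - r"
  by (induction u r e rule: area_from.induct) force+

lemma area_step: "Suc j < length (area_from u r e) \<Longrightarrow>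
   area_from u r e ! Suc j \<le> area_from u r e ! j + 1"
proof (induction u r e arbitrary: j rule: area_from.induct)
  case (1 u r) then show ?case by simp
next
  case (2 u r w)
  show ?case
  proof (cases j)
    case 0
    have "area_from (Suc u) r w \<noteq> []"
    proof
      assume "area_from (Suc u) r w = []"
      then have "cntA w = 0" by (metis length_area_from list.size(3))
      with 2 0 show False by simp
    qed
    then have "area_from (Suc u) r w ! 0 \<le> Suc u - r" by (rule area_head)
    then show ?thesis using 0 by simp
  next
    case (Suc j') then show ?thesis using 2 by simp
  qed
next
  case (3 u r w) then show ?case by simp
qed

lemma insl_len[simp]: "k \<le> length w \<Longrightarrow> length (insl k h w) = Suc (length w)"
  by (simp add: insl_def)
lemma insl_nth_k[simp]: "k \<le> length w \<Longrightarrow> insl k h w ! k = h"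
  by (simp add: insl_def nth_append)
lemma insl_nth_lt: "k \<le> length w \<Longrightarrow> j < k \<Longrightarrow> insl k h w ! j = w ! j"
  by (simp add: insl_def nth_append)
lemma insl_nth_gt: "k \<le> length w \<Longrightarrow> k < j \<Longrightarrow> insl k h w ! j = w ! (j - 1)"
proof -
  assume a: "k \<le> length w" "k < j"
  then have e: "j - k = Suc (j - 1 - k)" by simp
  have "insl k h w ! j = (h # drop k w) ! (j - k)" using a by (simp add: insl_def nth_append)
  also have "\<dots> = drop k w ! (j - 1 - k)" by (simp only: e nth_Cons_Suc)
  also have "\<dots> = w ! (j - 1)" using a by simp
  finally show ?thesis .
qed

lemma diag_level_Suc: "q < length d \<Longrightarrow>
  diag_level d (Suc q) = diag_level d q + (if d ! q = A then 1 else -1)"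
  by (cases "d ! q") (auto simp: diag_level_def take_Suc_nth)

lemma diag_level_0[simp]: "diag_level d 0 = 0"
  by (simp add: diag_level_def)

lemma dyck_iff: "dyck n d \<longleftrightarrow> cntA d = n \<and> cntB d = n \<and> (\<forall>k\<le>length d. diag_level d k \<ge> 0)"
  by (auto simp: dyck_def diag_level_def)

lemma dyck_len: "dyck n d \<Longrightarrow> length d = 2 * n"
  by (simp add: dyck_def cnt_len)

lemma diag_level_ins:
  assumes "p \<le> length e"
  shows "diag_level (take p e @ [A,B] @ drop p e) q =
    (if q \<le> p then diag_level e q else if q = Suc p then diag_level e p + 1 else diag_level e (q - 2))"
proof -
  let ?d = "take p e @ [A,B] @ drop p e"
  have lp: "length (take p e) = p" using assms by simp
  consider "q \<le> p" | "q = Suc p" | "q \<ge> Suc (Suc p)" by linarith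
  then show ?thesis
  proof cases
    case 1
    then have "take q ?d = take q e" using lp by (simp add: take_append min_def)
    then show ?thesis using 1 by (simp add: diag_level_def)
  next
    case 2
    then have "take q ?d = take p e @ [A]" using lp by (simp add: take_append)
    then show ?thesis using 2 by (simp add: diag_level_def)
  next
    case 3
    then have qp: "q - p = Suc (Suc (q - Suc (Suc p)))" by simp
    have "take q ?d = take p e @ [A,B] @ take (q - Suc (Suc p)) (drop p e)"
      using lp 3 by (simp add: take_append qp)
    moreover have "take (q - 2) e = take p e @ take (q - Suc (Suc p)) (drop p e)"
    proof -
      have "q - 2 = p + (q - Suc (Suc p))" using 3 by simp
      then show ?thesis by (metis take_add)
    qed
    ultimately have "diag_level ?d q = diag_level e (q - 2)"
      by (simp add: diag_level_def)
    then show ?thesis using 3 by simp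
  qed
qed

lemma dyck_ins:
  assumes "dyck n e" "p \<le> length e"
  shows "dyck (Suc n) (take p e @ [A,B] @ drop p e)"
proof -
  let ?d = "take p e @ [A,B] @ drop p e"
  have "cntA e = cntA (take p e) + cntA (drop p e)" "cntB e = cntB (take p e) + cntB (drop p e)"
    by (metis append_take_drop_id cntA_simps(4), metis append_take_drop_id cntB_simps(4))
  then have c: "cntA ?d = Suc (cntA e)" "cntB ?d = Suc (cntB e)" by simp_all
  have "diag_level ?d q \<ge> 0" if "q \<le> length ?d" for q
  proof -
    have "\<forall>k\<le>length e. diag_level e k \<ge> 0" using assms(1) by (simp add: dyck_iff)
    then show ?thesis using diag_level_ins[OF assms(2), of q] that assms(2) by auto
  qed
  then show ?thesis using c assms by (auto simp: dyck_iff)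
qed

lemma area_dyck_pos:
  assumes "dyck n e" "pos < length e" "e ! pos = A"
  shows "area e ! cntA (take pos e) = nat (diag_level e pos) \<and> cntA (take pos e) < n"
  using area_at_pos[OF assms(2,3), of 0 0] assms(1)
  by (auto simp: area_def diag_level_def dyck_def)

lemma level_bound:
  assumes "\<forall>v\<in>set (area d). v \<le> b" "q \<le> length d"
  shows "diag_level d q \<le> 1 + int b"
  using assms(2)
proof (induction q)
  case 0 then show ?case by simp
next
  case (Suc q)
  then have q: "q < length d" by simp
  show ?case
  proof (cases "d ! q")
    case A
    have "area_from 0 0 d ! cntA (take q d) = cntA (take q d) - cntB (take q d)"
      "cntA (take q d) < cntA d"
      using area_at_pos[OF q A, of 0 0] by auto
    then have "cntA (take q d) - cntB (take q d) \<le> b"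
      using assms(1) by (metis area_def length_area_from nth_mem)
    then have "diag_level d q \<le> int b" by (simp add: diag_level_def)
    then show ?thesis using diag_level_Suc[OF q] A by simp
  next
    case B
    then show ?thesis using diag_level_Suc[OF q] Suc by simp
  qed
qed

lemma max_level_eq:
  assumes "\<forall>q\<le>length d. diag_level d q \<le> L" "q0 \<le> length d" "diag_level d q0 = L"
  shows "max_level d = L"
  unfolding max_level_def
  by (rule Max_eqI) (use assms in auto)

lemma max_level_ge: "q \<le> length d \<Longrightarrow> diag_level d q \<le> max_level d"
  unfolding max_level_def by (rule Max_ge) auto

lemma final_peak_ins:
  assumes dy: "dyck n e" and p: "p \<le> length e"
    and hdef: "diag_level e p = int h" and kdef: "k = cntA (take p e)"
    and all: "\<forall>j<n. area e ! j \<le> h"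
    and later: "\<forall>j. k \<le> j \<longrightarrow> j < n \<longrightarrow> area e ! j < h"
  shows "is_final_max_peak (take p e @ [A,B] @ drop p e) p"
proof -
  let ?d = "take p e @ [A,B] @ drop p e"
  have dy': "dyck (Suc n) ?d" by (rule dyck_ins[OF dy p])
  have ln: "length (area e) = n" using dy by (simp add: dyck_def area_def)
  have hk: "h = cntA (take p e) - cntB (take p e)"
    using hdef by (simp add: diag_level_def)
  have kn: "k \<le> n" using kdef dy cntA_take_mono[of p "length e" e] p by (simp add: dyck_def)
  have ad: "area ?d = insl k h (area e)" using area_ins[of p e] kdef hk by simp
  have allw: "\<forall>v\<in>set (area ?d). v \<le> h"
  proof
    fix v assume "v \<in> set (area ?d)"
    then obtain j where j: "j < Suc n" "insl k h (area e) ! j = v"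
      using ad kn ln by (metis in_set_conv_nth insl_len)
    then show "v \<le> h" using all kn ln
      by (cases "j < k"; cases "j = k") (auto simp: insl_nth_lt insl_nth_gt)
  qed
  have lb: "\<forall>q\<le>length ?d. diag_level ?d q \<le> 1 + int h"
    using level_bound[OF allw] by blast
  have lp1: "diag_level ?d (Suc p) = 1 + int h" using diag_level_ins[OF p] hdef by simp
  have lenp: "Suc p \<le> length ?d" using p by simp
  have ml: "max_level ?d = 1 + int h" by (rule max_level_eq[OF lb lenp lp1])
  have late: "diag_level ?d q \<le> int h" if "Suc (Suc p) \<le> q" "q \<le> length ?d" for q
    using that
  proof (induction q rule: dec_induct)
    case base then show ?case using diag_level_ins[OF p] hdef by simp
  next
    case (step q)
    then have q: "q < length ?d" by simp
    show ?case
    proof (cases "?d ! q")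
      case A
      have av: "area ?d ! cntA (take q ?d) = nat (diag_level ?d q)" "cntA (take q ?d) < Suc n"
        using area_dyck_pos[OF dy' q A] by auto
      have "cntA (take (Suc (Suc p)) ?d) \<le> cntA (take q ?d)"
        using step(1) by (rule cntA_take_mono)
      moreover have "cntA (take (Suc (Suc p)) ?d) = Suc k"
        using p kdef by (simp add: take_append)
      ultimately have ge: "Suc k \<le> cntA (take q ?d)" by simp
      then have "area ?d ! cntA (take q ?d) = area e ! (cntA (take q ?d) - 1)"
        using ad kn ln by (simp add: insl_nth_gt)
      moreover have "area e ! (cntA (take q ?d) - 1) < h"
      proof -
        obtain c where c: "c = cntA (take q ?d)" by simp
        have "Suc k \<le> c" "c < Suc n" using ge av(2) c by auto
        then have "area e ! (c - 1) < h" using later by auto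
        then show ?thesis using c by simp
      qed
      ultimately have "nat (diag_level ?d q) < h" using av by simp
      moreover have "diag_level ?d q \<ge> 0" using dy' q by (auto simp: dyck_iff)
      ultimately show ?thesis using diag_level_Suc[OF q] A by simp
    next
      case B
      then show ?thesis using diag_level_Suc[OF q] step.IH[OF less_imp_le[OF q]] by simp
    qed
  qed
  have pk: "is_peak ?d p" using p by (simp add: is_peak_def nth_append)
  show ?thesis unfolding is_final_max_peak_def is_max_peak_def
  proof (intro conjI allI impI)
    show "is_peak ?d p" by (rule pk)
    show "diag_level ?d (Suc p) = max_level ?d" using ml lp1 by simp
    fix k' assume "is_peak ?d k' \<and> diag_level ?d (Suc k') = max_level ?d"
    then have "Suc k' < length ?d" "diag_level ?d (Suc k') = 1 + int h"
      using ml by (auto simp: is_peak_def)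
    then show "k' \<le> p" using late[of "Suc k'"] p by (cases "Suc (Suc p) \<le> Suc k'") auto
  qed
qed

lemma pi_gen:
  assumes "r \<le> u" "\<forall>q\<le>length e. r + cntB (take q e) \<le> u + cntA (take q e)" "k \<le> cntA e"
    "k = 0 \<longrightarrow> h \<le> u - r"
    "0 < k \<longrightarrow> h \<le> area_from u r e ! (k - 1) + 1"
    "k < cntA e \<longrightarrow> area_from u r e ! k \<le> h"
    "k = cntA e \<longrightarrow> (u + cntA e) - (r + cntB e) \<le> h"
  shows "\<exists>p\<le>length e. cntA (take p e) = k \<and> (u + cntA (take p e)) - (r + cntB (take p e)) = h"
  using assms
proof (induction e arbitrary: u r k)
  case Nil then show ?case by auto
next
  case (Cons a e)
  have pre: "\<forall>q\<le>length e. r + cntB (take (Suc q) (a#e)) \<le> u + cntA (take (Suc q) (a#e))"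
    using Cons.prems(2) by auto
  show ?case
  proof (cases a)
    case A
    show ?thesis
    proof (cases k)
      case 0
      then have "h = u - r" using Cons.prems A by auto
      then show ?thesis using 0 by (intro exI[of _ 0]) auto
    next
      case (Suc k')
      have "\<exists>p\<le>length e. cntA (take p e) = k' \<and> (Suc u + cntA (take p e)) - (r + cntB (take p e)) = h"
      proof (rule Cons.IH)
        show "r \<le> Suc u" using Cons.prems by simp
        show "\<forall>q\<le>length e. r + cntB (take q e) \<le> Suc u + cntA (take q e)" using pre A by simp
        show "k' \<le> cntA e" using Cons.prems Suc A by simp
        show "k' = 0 \<longrightarrow> h \<le> Suc u - r" using Cons.prems Suc A by auto
        show "0 < k' \<longrightarrow> h \<le> area_from (Suc u) r e ! (k' - 1) + 1"
          using Cons.prems(5) Suc A by (cases k') auto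
        show "k' < cntA e \<longrightarrow> area_from (Suc u) r e ! k' \<le> h" using Cons.prems(6) Suc A by auto
        show "k' = cntA e \<longrightarrow> Suc u + cntA e - (r + cntB e) \<le> h" using Cons.prems(7) Suc A by auto
      qed
      then obtain p where "p \<le> length e" "cntA (take p e) = k'"
        "(Suc u + cntA (take p e)) - (r + cntB (take p e)) = h" by blast
      then show ?thesis using A Suc by (intro exI[of _ "Suc p"]) auto
    qed
  next
    case B
    have ru: "Suc r \<le> u" using Cons.prems(2)[rule_format, of 1] B by simp
    show ?thesis
    proof (cases "k = 0 \<and> h = u - r")
      case True then show ?thesis by (intro exI[of _ 0]) auto
    next
      case False
      have "\<exists>p\<le>length e. cntA (take p e) = k \<and> (u + cntA (take p e)) - (Suc r + cntB (take p e)) = h"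
      proof (rule Cons.IH)
        show "Suc r \<le> u" by (rule ru)
        show "\<forall>q\<le>length e. Suc r + cntB (take q e) \<le> u + cntA (take q e)" using pre B by simp
        show "k \<le> cntA e" using Cons.prems B by simp
        show "k = 0 \<longrightarrow> h \<le> u - Suc r" using Cons.prems(4) False by auto
        show "0 < k \<longrightarrow> h \<le> area_from u (Suc r) e ! (k - 1) + 1" using Cons.prems(5) B by auto
        show "k < cntA e \<longrightarrow> area_from u (Suc r) e ! k \<le> h" using Cons.prems(6) B by auto
        show "k = cntA e \<longrightarrow> u + cntA e - (Suc r + cntB e) \<le> h" using Cons.prems(7) B by auto
      qed
      then obtain p where "p \<le> length e" "cntA (take p e) = k"
        "(u + cntA (take p e)) - (Suc r + cntB (take p e)) = h" by blast
      then show ?thesis using B by (intro exI[of _ "Suc p"]) auto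
    qed
  qed
qed

lemma path_pos_exists:
  assumes dy: "dyck n e" and kn: "k \<le> n"
    and k0: "k = 0 \<longrightarrow> h = 0"
    and kp: "0 < k \<longrightarrow> h \<le> area e ! (k - 1) + 1"
    and kl: "k < n \<longrightarrow> area e ! k \<le> h"
  shows "\<exists>p\<le>length e. cntA (take p e) = k \<and> diag_level e p = int h"
proof -
  have "\<exists>p\<le>length e. cntA (take p e) = k \<and> (0 + cntA (take p e)) - (0 + cntB (take p e)) = h"
    by (rule pi_gen) (use assms in \<open>auto simp: dyck_def area_def\<close>)
  then obtain p where p: "p \<le> length e" "cntA (take p e) = k" "cntA (take p e) - cntB (take p e) = h"
    by auto
  have "cntB (take p e) \<le> cntA (take p e)" using dy p(1) by (simp add: dyck_def)
  then show ?thesis using p by (intro exI[of _ p]) (auto simp: diag_level_def)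
qed

definition good :: "nat \<Rightarrow> nat \<Rightarrow> step list \<Rightarrow> bool" where
  "good u r d \<longleftrightarrow> (\<forall>q\<le>length d. r + cntB (take q d) \<le> u + cntA (take q d)) \<and> r + cntB d = u + cntA d"

lemma good_A: "good u r (A # d) \<Longrightarrow> good (Suc u) r d"
  unfolding good_def
proof (intro conjI allI impI)
  fix q assume "(\<forall>q\<le>length (A # d). r + cntB (take q (A # d)) \<le> u + cntA (take q (A # d))) \<and>
    r + cntB (A # d) = u + cntA (A # d)" "q \<le> length d"
  then show "r + cntB (take q d) \<le> Suc u + cntA (take q d)"
    by (metis Suc_le_mono cntA_simps(2) cntB_simps(3) add_Suc_right add_Suc length_Cons take_Suc_Cons)
qed auto

lemma good_B: "good u r (B # d) \<Longrightarrow> good u (Suc r) d \<and> Suc r \<le> u"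
  unfolding good_def
proof (intro conjI allI impI)
  assume a: "(\<forall>q\<le>length (B # d). r + cntB (take q (B # d)) \<le> u + cntA (take q (B # d))) \<and>
    r + cntB (B # d) = u + cntA (B # d)"
  fix q assume "q \<le> length d"
  then show "Suc r + cntB (take q d) \<le> u + cntA (take q d)"
    using a by (metis Suc_le_mono cntA_simps(3) cntB_simps(2) add_Suc_right add_Suc length_Cons take_Suc_Cons)
next
  assume a: "(\<forall>q\<le>length (B # d). r + cntB (take q (B # d)) \<le> u + cntA (take q (B # d))) \<and>
    r + cntB (B # d) = u + cntA (B # d)"
  then show "Suc r \<le> u" using a[THEN conjunct1, rule_format, of 1] by simp
qed auto

lemma area_inj_gen:
  "area_from u r d1 = area_from u r d2 \<Longrightarrow> good u r d1 \<Longrightarrow> good u r d2 \<Longrightarrow> d1 = d2"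
proof (induction d1 arbitrary: d2 u r)
  case Nil
  then have "cntA d2 = 0" by (metis area_from.simps(1) length_area_from list.size(3))
  moreover have "cntB d2 = 0" using Nil calculation by (simp add: good_def)
  ultimately show ?case by (metis cnt_len add_0 length_0_conv)
next
  case (Cons a d1)
  note IH = Cons.IH
  note prems = Cons.prems
  show ?case
  proof (cases d2)
    case Nil
    then have "cntA (a # d1) = 0" using Cons.prems(1)
      by (metis area_from.simps(1) length_area_from list.size(3))
    moreover have "cntB (a # d1) = 0" using Cons.prems Nil calculation by (simp add: good_def)
    ultimately show ?thesis by (metis cnt_len add_0 length_0_conv list.distinct(1))
  next
    case (Cons b d2')
    show ?thesis
    proof (cases a; cases b)
      assume "a = A" "b = A"
      moreover have "d1 = d2'"
        by (rule IH[where u="Suc u" and r=r]) (use Cons prems good_A calculation in auto)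
      ultimately show ?thesis using Cons by simp
    next
      assume "a = B" "b = B"
      moreover have "d1 = d2'"
        by (rule IH[where u=u and r="Suc r"]) (use Cons prems good_B calculation in auto)
      ultimately show ?thesis using Cons by simp
    next
      assume ab: "a = A" "b = B"
      then have ru: "Suc r \<le> u" using good_B Cons prems(3) by blast
      have eq: "(u - r) # area_from (Suc u) r d1 = area_from u (Suc r) d2'"
        using prems(1) Cons ab by simp
      then have "area_from u (Suc r) d2' \<noteq> []" by auto
      then have "area_from u (Suc r) d2' ! 0 \<le> u - Suc r" by (rule area_head)
      moreover have "area_from u (Suc r) d2' ! 0 = u - r" using eq by (metis nth_Cons_0)
      ultimately show ?thesis using ru by simp
    next
      assume ab: "a = B" "b = A"
      then have ru: "Suc r \<le> u" using good_B prems(2) by blast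
      have eq: "(u - r) # area_from (Suc u) r d2' = area_from u (Suc r) d1"
        using prems(1) Cons ab by simp
      then have "area_from u (Suc r) d1 \<noteq> []" by auto
      then have "area_from u (Suc r) d1 ! 0 \<le> u - Suc r" by (rule area_head)
      moreover have "area_from u (Suc r) d1 ! 0 = u - r" using eq by (metis nth_Cons_0)
      ultimately show ?thesis using ru by simp
    qed
  qed
qed

lemma area_inj: "dyck n d1 \<Longrightarrow> dyck m d2 \<Longrightarrow> area d1 = area d2 \<Longrightarrow> d1 = d2"
  by (rule area_inj_gen[of 0 0]) (auto simp: area_def good_def dyck_def)

lemma length_area_dyck: "dyck m d \<Longrightarrow> length (area d) = m"
  by (simp add: area_def dyck_def)

lemma area_dyck_row:
  assumes "dyck m d" "j < m"
  shows "\<exists>pos<length d. d ! pos = A \<and> cntA (take pos d) = j \<and> area d ! j = nat (diag_level d pos)"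
proof -
  obtain pos where "pos < length d" "d ! pos = A" "cntA (take pos d) = j"
    using row_pos[of j d] assms by (auto simp: dyck_def)
  then show ?thesis using area_dyck_pos[OF assms(1), of pos] by auto
qed

lemma area_dyck_step: "dyck m d \<Longrightarrow> Suc j < m \<Longrightarrow> area d ! Suc j \<le> area d ! j + 1"
  using area_step[of j 0 0 d] by (simp add: area_def dyck_def)

lemma area_dyck_0: "dyck m d \<Longrightarrow> 0 < m \<Longrightarrow> area d ! 0 = 0"
  using area_head[of 0 0 d] by (auto simp: area_def dyck_def simp flip: length_0_conv)

lemma dyck_level_nonneg: "dyck m d \<Longrightarrow> q \<le> length d \<Longrightarrow> diag_level d q \<ge> 0"
  by (simp add: dyck_iff)

lemma removal:
  assumes dy: "dyck (Suc n) d"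
  shows "\<exists>p e k h. p \<le> length e \<and> dyck n e \<and> d = take p e @ [A,B] @ drop p e \<and>
     k = cntA (take p e) \<and> diag_level e p = int h \<and> area d = insl k h (area e) \<and> k \<le> n \<and>
     (\<forall>j<n. area e ! j \<le> h) \<and> (\<forall>j. k \<le> j \<longrightarrow> j < n \<longrightarrow> area e ! j < h)"
proof -
  define L where "L = length d"
  have L: "L = 2 * Suc n" using dyck_len[OF dy] L_def by simp
  define M where "M = max_level d"
  define Qs where "Qs = {q. q \<le> L \<and> diag_level d q = M}"
  have "M \<in> diag_level d ` {0..L}" unfolding M_def max_level_def L_def
    by (rule Max_in) auto
  then have Qne: "Qs \<noteq> {}" unfolding Qs_def by auto
  have Qfin: "finite Qs" unfolding Qs_def by simp
  define q where "q = Max Qs"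
  have qQ: "q \<in> Qs" using Qne Qfin q_def Max_in by blast
  have qmax: "\<And>q'. q' \<in> Qs \<Longrightarrow> q' \<le> q" using Qfin q_def by simp
  have qL: "q \<le> L" and lq: "diag_level d q = M" using qQ Qs_def by auto
  have allM: "\<And>q'. q' \<le> L \<Longrightarrow> diag_level d q' \<le> M" unfolding M_def L_def by (rule max_level_ge)
  have l0: "0 < L" using L by simp
  have lev1: "diag_level d 1 = 1"
  proof -
    have "diag_level d 1 \<ge> 0" using dyck_level_nonneg[OF dy, of 1] l0 L_def by simp
    then show ?thesis using diag_level_Suc[of 0 d] l0 L_def by (auto split: if_splits)
  qed
  have M1: "M \<ge> 1" using allM[of 1] l0 lev1 by simp
  have q0: "q \<noteq> 0" using lq M1 by (cases q) auto
  have levL: "diag_level d L = 0" using dy L_def by (simp add: diag_level_def dyck_def)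
  have qL': "q < L" using qL lq M1 levL by (cases "q = L") auto
  define p where "p = q - 1"
  have pq: "Suc p = q" using q0 p_def by simp
  have dp: "d ! p = A"
  proof (rule ccontr)
    assume "d ! p \<noteq> A"
    then have "diag_level d q = diag_level d p - 1"
      using diag_level_Suc[of p d] pq qL' L_def by auto
    then show False using allM[of p] pq qL' lq by simp
  qed
  have dq: "d ! q = B"
  proof (rule ccontr)
    assume "d ! q \<noteq> B"
    then have "d ! q = A" by (cases "d ! q") auto
    then have "diag_level d (Suc q) = M + 1"
      using diag_level_Suc[of q d] qL' L_def lq by auto
    then show False using allM[of "Suc q"] qL' by simp
  qed
  define e where "e = take p d @ drop (Suc (Suc p)) d"
  have pL: "Suc (Suc p) \<le> L" using pq qL' by simp
  have tpe: "take p e = take p d" using pL L_def by (simp add: e_def)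
  have dpe: "drop p e = drop (Suc (Suc p)) d" using pL L_def by (simp add: e_def)
  have dec: "d = take p e @ [A,B] @ drop p e"
  proof -
    have "d = take p d @ d ! p # drop (Suc p) d" using pL L_def by (simp add: id_take_nth_drop)
    moreover have "drop (Suc p) d = d ! Suc p # drop (Suc (Suc p)) d"
      using pL L_def by (simp add: Cons_nth_drop_Suc)
    ultimately show ?thesis using tpe dpe dp dq pq by simp
  qed
  have lene: "length e = L - 2" using pL L_def by (simp add: e_def)
  have ple: "p \<le> length e" using lene pL by simp
  have ce: "cntA d = Suc (cntA e)" "cntB d = Suc (cntB e)"
  proof -
    have "cntA e = cntA (take p e) + cntA (drop p e)" "cntB e = cntB (take p e) + cntB (drop p e)"
      by (metis append_take_drop_id cntA_simps(4), metis append_take_drop_id cntB_simps(4))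
    moreover have "cntA d = cntA (take p e) + cntA ([A,B] @ drop p e)"
      "cntB d = cntB (take p e) + cntB ([A,B] @ drop p e)"
      using dec by (metis cntA_simps(4), metis cntB_simps(4))
    ultimately show "cntA d = Suc (cntA e)" "cntB d = Suc (cntB e)" by simp_all
  qed
  have lev_rel: "\<And>q'. diag_level d q' = (if q' \<le> p then diag_level e q'
      else if q' = Suc p then diag_level e p + 1 else diag_level e (q' - 2))"
    using diag_level_ins[OF ple] dec by metis
  have dye: "dyck n e"
    unfolding dyck_iff
  proof (intro conjI allI impI)
    show "cntA e = n" "cntB e = n" using ce dy by (auto simp: dyck_def)
    fix q' assume q': "q' \<le> length e"
    show "0 \<le> diag_level e q'"
    proof (cases "q' \<le> p")
      case True
      then show ?thesis using lev_rel[of q'] dyck_level_nonneg[OF dy, of q'] q' lene L_def by auto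
    next
      case False
      then show ?thesis using lev_rel[of "q' + 2"] dyck_level_nonneg[OF dy, of "q' + 2"] q' lene L_def
        by auto
    qed
  qed
  define k where "k = cntA (take p e)"
  have lep: "diag_level e p = M - 1" using lev_rel[of q] pq lq by simp
  define h where "h = nat (diag_level e p)"
  have hint: "diag_level e p = int h" using lep M1 h_def by simp
  have ad: "area d = insl k h (area e)"
  proof -
    have "cntA (take p e) - cntB (take p e) = h" using hint by (simp add: diag_level_def)
    then show ?thesis using area_ins[of p e] dec k_def by simp
  qed
  have kn: "k \<le> n" using k_def cntA_take_mono[of p "length e" e] ple dye by (simp add: dyck_def)
  have lae: "length (area e) = n" using length_area_dyck[OF dye] .
  have vals: "area d ! j' \<le> h" if jn: "j' < Suc n" for j'
  proof -
    obtain pos where pos: "pos < length d" "d ! pos = A" "area d ! j' = nat (diag_level d pos)"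
      using area_dyck_row[OF dy jn] by auto
    have "diag_level d (Suc pos) = diag_level d pos + 1" using diag_level_Suc[OF pos(1)] pos(2) by simp
    moreover have "diag_level d (Suc pos) \<le> M" using allM[of "Suc pos"] pos(1) L_def by simp
    ultimately show ?thesis using pos(3) lep hint by simp
  qed
  have allv: "\<forall>j<n. area e ! j \<le> h"
  proof (intro allI impI)
    fix j assume j: "j < n"
    show "area e ! j \<le> h"
    proof (cases "j < k")
      case True
      then show ?thesis using vals[of j] ad insl_nth_lt[of k "area e" j h] kn lae j by simp
    next
      case False
      then show ?thesis using vals[of "Suc j"] ad insl_nth_gt[of k "area e" "Suc j" h] kn lae j by simp
    qed
  qed
  have later: "\<forall>j. k \<le> j \<longrightarrow> j < n \<longrightarrow> area e ! j < h"
  proof (intro allI impI)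
    fix j assume j: "k \<le> j" "j < n"
    have ej: "area e ! j = area d ! Suc j" using ad insl_nth_gt[of k "area e" "Suc j" h] kn lae j by simp
    obtain pos where pos: "pos < length d" "d ! pos = A" "cntA (take pos d) = Suc j"
       "area d ! Suc j = nat (diag_level d pos)"
      using area_dyck_row[OF dy, of "Suc j"] j by auto
    have "p < pos"
    proof (rule ccontr)
      assume "\<not> p < pos"
      then have "cntA (take pos d) \<le> cntA (take p d)" by (simp add: cntA_take_mono)
      then show False using pos(3) tpe k_def j by simp
    qed
    then have qpos: "q < pos" using pq pos(2) dq by (cases "pos = q") auto
    have "diag_level d (Suc pos) \<noteq> M"
    proof
      assume "diag_level d (Suc pos) = M"
      then have "Suc pos \<in> Qs" using pos(1) L_def Qs_def by simp
      then show False using qmax qpos by fastforce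
    qed
    moreover have "diag_level d (Suc pos) \<le> M" using allM[of "Suc pos"] pos(1) L_def by simp
    moreover have "diag_level d (Suc pos) = diag_level d pos + 1"
      using diag_level_Suc[OF pos(1)] pos(2) by simp
    moreover have "diag_level d pos \<ge> 0" using dyck_level_nonneg[OF dy, of pos] pos(1) by simp
    ultimately show "area e ! j < h" using ej pos(4) lep hint by simp
  qed
  show ?thesis
    by (rule exI[of _ p], rule exI[of _ e], rule exI[of _ k], rule exI[of _ h])
       (use ple dye dec k_def hint ad kn allv later in auto)
qed

definition FF :: "nat list \<Rightarrow> nat \<Rightarrow> nat \<Rightarrow> nat" where
  "FF r h k = card {i. i < length r \<and> (r ! i + 2 \<le> h \<or> (r ! i + 1 = h \<and> i < k))}"

lemma FF_Suc: "FF r h (Suc j) = FF r h j + (if j < length r \<and> r ! j + 1 = h then 1 else 0)"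
proof -
  let ?S = "\<lambda>k. {i. i < length r \<and> (r ! i + 2 \<le> h \<or> (r ! i + 1 = h \<and> i < k))}"
  show ?thesis
  proof (cases "j < length r \<and> r ! j + 1 = h")
    case True
    then have "?S (Suc j) = insert j (?S j)" by auto
    moreover have "j \<notin> ?S j" using True by auto
    moreover have "finite (?S j)" by simp
    ultimately show ?thesis using True by (simp add: FF_def)
  next
    case False
    then have "?S (Suc j) = ?S j" by (auto simp: less_Suc_eq)
    then show ?thesis using False by (simp add: FF_def)
  qed
qed

lemma FF_mono: "j \<le> j' \<Longrightarrow> FF r h j \<le> FF r h j'"
  by (induction j' rule: dec_induct) (auto simp: FF_Suc intro: le_trans)

lemma FF_0: "FF r h 0 = card {i. i < length r \<and> r ! i + 2 \<le> h}"
  by (simp add: FF_def)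

lemma FF_len: "FF r h (length r) = card {i. i < length r \<and> r ! i + 1 \<le> h}"
proof -
  have "{i. i < length r \<and> (r ! i + 2 \<le> h \<or> (r ! i + 1 = h \<and> i < length r))} =
        {i. i < length r \<and> r ! i + 1 \<le> h}" by auto
  then show ?thesis by (simp add: FF_def)
qed

lemma FF_step_strict: "j < length r \<Longrightarrow> r ! j + 1 = h \<Longrightarrow> FF r h (Suc j) = Suc (FF r h j)"
  by (simp add: FF_Suc)

lemma uniq_aux_h:
  assumes "r \<noteq> []" "M = Max (set r)" "0 < k1" "k1 \<le> length r" "k2 \<le> length r"
    "r ! (k1 - 1) = M"
  shows "FF r (Suc M) k1 \<noteq> FF r M k2"
proof -
  have "FF r (Suc M) k1 = Suc (FF r (Suc M) (k1 - 1))"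
    using FF_step_strict[of "k1 - 1" r "Suc M"] assms by simp
  moreover have "FF r (Suc M) 0 \<le> FF r (Suc M) (k1 - 1)" by (rule FF_mono) simp
  moreover have "FF r M k2 \<le> FF r M (length r)" using assms by (intro FF_mono) simp
  moreover have "FF r M (length r) = FF r (Suc M) 0"
  proof -
    have "{i. i < length r \<and> r ! i + 1 \<le> M} = {i. i < length r \<and> r ! i + 2 \<le> Suc M}" by auto
    then show ?thesis by (simp add: FF_len FF_0)
  qed
  ultimately show ?thesis by linarith
qed

lemma uniq_aux_k:
  assumes "k1 < k2" "k2 \<le> length r" "r ! (k2 - 1) + 1 = h"
  shows "FF r h k1 \<noteq> FF r h k2"
proof -
  have "FF r h k2 = Suc (FF r h (k2 - 1))"
    using FF_step_strict[of "k2 - 1" r h] assms by simp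
  moreover have "FF r h k1 \<le> FF r h (k2 - 1)" using assms by (intro FF_mono) simp
  ultimately show ?thesis by simp
qed

definition okins :: "nat list \<Rightarrow> nat \<Rightarrow> nat \<Rightarrow> bool" where
  "okins r k h \<longleftrightarrow> k \<le> length r \<and> (\<forall>j<length r. r ! j \<le> h) \<and>
     (\<forall>j. k \<le> j \<longrightarrow> j < length r \<longrightarrow> r ! j < h) \<and> (k = 0 \<longrightarrow> h = 0) \<and>
     (0 < k \<longrightarrow> h \<le> r ! (k - 1) + 1)"

lemma okins_uniq:
  assumes o1: "okins r k1 h1" and o2: "okins r k2 h2" and eq: "FF r h1 k1 = FF r h2 k2"
  shows "k1 = k2 \<and> h1 = h2"
proof (cases "r = []")
  case True then show ?thesis using o1 o2 by (simp add: okins_def)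
next
  case False
  define M where "M = Max (set r)"
  have Min: "M \<in> set r" using False M_def by simp
  have Mge: "\<And>j. j < length r \<Longrightarrow> r ! j \<le> M" using M_def by simp
  have kpos: "\<And>k h. okins r k h \<Longrightarrow> 0 < k"
  proof (rule ccontr)
    fix k h assume "okins r k h" "\<not> 0 < k"
    then have "r ! 0 < 0" using False by (auto simp: okins_def)
    then show False by simp
  qed
  have hrange: "\<And>k h. okins r k h \<Longrightarrow> h = M \<or> (h = Suc M \<and> r ! (k - 1) = M)"
  proof -
    fix k h assume o: "okins r k h"
    then have "0 < k" by (rule kpos)
    then have "h \<le> r ! (k - 1) + 1" "k - 1 < length r" using o by (auto simp: okins_def)
    moreover have "r ! (k - 1) \<le> M" using Mge calculation by simp
    moreover have "M \<le> h" using Min o by (auto simp: okins_def in_set_conv_nth)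
    ultimately show "h = M \<or> (h = Suc M \<and> r ! (k - 1) = M)" by linarith
  qed
  have h12: "h1 = h2"
  proof (rule ccontr)
    assume ne: "h1 \<noteq> h2"
    then consider "h1 = Suc M" "r ! (k1 - 1) = M" "h2 = M" | "h2 = Suc M" "r ! (k2 - 1) = M" "h1 = M"
      using hrange[OF o1] hrange[OF o2] by auto
    then show False
    proof cases
      case 1 then show False using uniq_aux_h[of r M k1 k2] False M_def kpos[OF o1] o1 o2 eq
          by (auto simp: okins_def)
    next
      case 2 then show False using uniq_aux_h[of r M k2 k1] False M_def kpos[OF o2] o1 o2 eq
          by (auto simp: okins_def)
    qed
  qed
  have cond: "\<And>k1 k2 h. okins r k1 h \<Longrightarrow> okins r k2 h \<Longrightarrow> k1 < k2 \<Longrightarrow> r ! (k2 - 1) + 1 = h"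
  proof -
    fix k1 k2 h assume a: "okins r k1 h" "okins r k2 h" "k1 < k2"
    have i: "k1 \<le> k2 - 1" "k2 - 1 < length r" using a(2,3) by (auto simp: okins_def)
    have "r ! (k2 - 1) < h" using a(1) i unfolding okins_def by blast
    moreover have "h \<le> r ! (k2 - 1) + 1" using a(2,3) unfolding okins_def by auto
    ultimately show "r ! (k2 - 1) + 1 = h" by simp
  qed
  have "k1 = k2"
  proof (rule ccontr)
    assume "k1 \<noteq> k2"
    then consider "k1 < k2" | "k2 < k1" by linarith
    then show False
    proof cases
      case 1 then show False using uniq_aux_k[of k1 k2 r h1] cond[of k1 h1 k2] o1 o2 h12 eq
          by (auto simp: okins_def)
    next
      case 2 then show False using uniq_aux_k[of k2 k1 r h1] cond[of k2 h1 k1] o1 o2 h12 eq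
          by (auto simp: okins_def)
    qed
  qed
  then show ?thesis using h12 by simp
qed

definition P0 :: "nat list \<Rightarrow> nat \<Rightarrow> nat \<Rightarrow> bool" where
  "P0 w i j \<longleftrightarrow> i < length w \<and> j < length w \<and> (w ! i + 2 \<le> w ! j \<or> (w ! i + 1 = w ! j \<and> i < j))"

definition dsw :: "nat list \<Rightarrow> nat \<Rightarrow> nat" where
  "dsw w j = card {i. P0 w i j}"

definition MSw :: "nat list \<Rightarrow> nat multiset" where
  "MSw w = image_mset (dsw w) (mset_set {..<length w})"

definition sh :: "nat \<Rightarrow> nat \<Rightarrow> nat" where
  "sh k i = (if i < k then i else Suc i)"

lemma finite_P0[simp]: "finite {i. P0 w i j}"
  by (rule finite_subset[of _ "{..<length w}"]) (auto simp: P0_def)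

lemma dsw_FF: "j < length r \<Longrightarrow> dsw r j = FF r (r ! j) j"
  unfolding dsw_def FF_def P0_def by simp

lemma inj_sh: "inj_on (sh k) S"
  by (auto simp: inj_on_def sh_def split: if_splits)

lemma insl_sh: "k \<le> length r \<Longrightarrow> i < length r \<Longrightarrow> insl k h r ! sh k i = r ! i"
  by (auto simp: sh_def insl_nth_lt insl_nth_gt)

lemma sh_surj:
  assumes "k \<le> n" "i < Suc n" "i \<noteq> k" shows "\<exists>i'<n. i = sh k i'"
proof (cases "i < k")
  case True
  then show ?thesis using assms by (intro exI[of _ i]) (auto simp: sh_def)
next
  case False
  then have "k < i" using assms(3) by simp
  then show ?thesis using assms by (intro exI[of _ "i - 1"]) (auto simp: sh_def)
qed

lemma P0_ins_sh:
  assumes "k \<le> length r" "i < length r" "j < length r"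
  shows "P0 (insl k h r) (sh k i) (sh k j) \<longleftrightarrow> P0 r i j"
  using assms insl_sh[OF assms(1,2), of h] insl_sh[OF assms(1,3), of h]
  by (auto simp: P0_def sh_def split: if_splits)

lemma dsw_ins_old:
  assumes k: "k \<le> length r" and hge: "\<forall>j<length r. r ! j \<le> h" and j: "j < length r"
  shows "dsw (insl k h r) (sh k j) = dsw r j"
proof -
  let ?w = "insl k h r"
  have "{i. P0 ?w i (sh k j)} = sh k ` {i. P0 r i j}"
  proof
    show "sh k ` {i. P0 r i j} \<subseteq> {i. P0 ?w i (sh k j)}"
    proof
      fix x assume "x \<in> sh k ` {i. P0 r i j}"
      then obtain i where i: "P0 r i j" "x = sh k i" by auto
      then have "i < length r" by (simp add: P0_def)
      then show "x \<in> {i. P0 ?w i (sh k j)}" using P0_ins_sh[OF k _ j] i by simp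
    qed
    show "{i. P0 ?w i (sh k j)} \<subseteq> sh k ` {i. P0 r i j}"
    proof
      fix i assume i: "i \<in> {i. P0 ?w i (sh k j)}"
      then have il: "i < Suc (length r)" using k by (simp add: P0_def)
      have "i \<noteq> k"
      proof
        assume "i = k"
        then have "P0 ?w k (sh k j)" using i by simp
        moreover have "?w ! k = h" using k by simp
        moreover have "?w ! sh k j \<le> h" using insl_sh[OF k j, of h] hge j by simp
        ultimately show False by (simp add: P0_def)
      qed
      then obtain i' where i': "i' < length r" "i = sh k i'" using sh_surj[OF k il] by auto
      then have "P0 r i' j" using i P0_ins_sh[OF k i'(1) j] by simp
      then show "i \<in> sh k ` {i. P0 r i j}" using i' by simp
    qed
  qed
  then show ?thesis unfolding dsw_def by (simp add: card_image[OF inj_sh])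
qed

lemma sh_less: "sh k i < k \<longleftrightarrow> i < k"
  by (simp add: sh_def)

lemma dsw_ins_new:
  assumes k: "k \<le> length r"
  shows "dsw (insl k h r) k = FF r h k"
proof -
  let ?w = "insl k h r"
  let ?S = "{i. i < length r \<and> (r ! i + 2 \<le> h \<or> (r ! i + 1 = h \<and> i < k))}"
  have key: "P0 ?w (sh k i) k \<longleftrightarrow> i \<in> ?S" if i: "i < length r" for i
  proof -
    have "?w ! sh k i = r ! i" by (rule insl_sh[OF k i])
    moreover have "?w ! k = h" using k by simp
    moreover have "sh k i < length ?w" "k < length ?w" using k i by (auto simp: sh_def)
    ultimately show ?thesis using i by (simp add: P0_def sh_less)
  qed
  have "{i. P0 ?w i k} = sh k ` ?S"
  proof
    show "sh k ` ?S \<subseteq> {i. P0 ?w i k}"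
    proof
      fix x assume "x \<in> sh k ` ?S"
      then obtain i where i: "i \<in> ?S" "x = sh k i" by auto
      then show "x \<in> {i. P0 ?w i k}" using key[of i] by simp
    qed
    show "{i. P0 ?w i k} \<subseteq> sh k ` ?S"
    proof
      fix i assume i: "i \<in> {i. P0 ?w i k}"
      then have il: "i < Suc (length r)" using k by (simp add: P0_def)
      have "i \<noteq> k" using i by (auto simp: P0_def)
      then obtain i' where i': "i' < length r" "i = sh k i'" using sh_surj[OF k il] by auto
      then show "i \<in> sh k ` ?S" using i key[of i'] by simp
    qed
  qed
  then show ?thesis unfolding dsw_def FF_def by (simp add: card_image[OF inj_sh])
qed

lemma MSw_ins:
  assumes k: "k \<le> length r" and hge: "\<forall>j<length r. r ! j \<le> h"
  shows "MSw (insl k h r) = add_mset (FF r h k) (MSw r)"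
proof -
  let ?w = "insl k h r"
  have U: "{..<Suc (length r)} = insert k (sh k ` {..<length r})"
  proof
    show "{..<Suc (length r)} \<subseteq> insert k (sh k ` {..<length r})"
    proof
      fix i assume "i \<in> {..<Suc (length r)}"
      then have "i < Suc (length r)" by simp
      then show "i \<in> insert k (sh k ` {..<length r})"
        using sh_surj[OF k, of i] by (cases "i = k") auto
    qed
    show "insert k (sh k ` {..<length r}) \<subseteq> {..<Suc (length r)}"
      using k by (auto simp: sh_def)
  qed
  have kn: "k \<notin> sh k ` {..<length r}" by (auto simp: sh_def)
  have m1: "mset_set (sh k ` {..<length r}) = image_mset (sh k) (mset_set {..<length r})"
    by (rule image_mset_mset_set[OF inj_sh, symmetric])
  have "mset_set {..<length ?w} = mset_set (insert k (sh k ` {..<length r}))"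
    using k U by simp
  also have "\<dots> = add_mset k (mset_set (sh k ` {..<length r}))"
    using kn by (simp del: image_mset_mset_set)
  finally have m: "mset_set {..<length ?w} = add_mset k (image_mset (sh k) (mset_set {..<length r}))"
    using m1 by simp
  have "MSw ?w = add_mset (dsw ?w k) (image_mset (dsw ?w) (image_mset (sh k) (mset_set {..<length r})))"
    unfolding MSw_def m by simp
  also have "image_mset (dsw ?w) (image_mset (sh k) (mset_set {..<length r})) =
      image_mset (\<lambda>j. dsw ?w (sh k j)) (mset_set {..<length r})"
    by (simp add: image_mset.compositionality comp_def)
  also have "\<dots> = MSw r"
    unfolding MSw_def by (rule image_mset_cong) (use dsw_ins_old[OF k hge] in auto)
  finally show ?thesis using dsw_ins_new[OF k] by simp
qed

lemma dsw_mono: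
  assumes "j < length w" "j' < length w" "w ! j < w ! j' \<or> (w ! j = w ! j' \<and> j \<le> j')"
  shows "dsw w j \<le> dsw w j'"
  unfolding dsw_def
  by (rule card_mono) (use assms in \<open>auto simp: P0_def\<close>)

lemma dsw_ins_max:
  assumes o: "okins r k h" and j: "j < Suc (length r)"
  shows "dsw (insl k h r) j \<le> FF r h k"
proof -
  have k: "k \<le> length r" using o by (simp add: okins_def)
  show ?thesis
  proof (cases "j = k")
    case True then show ?thesis using dsw_ins_new[OF k] by simp
  next
    case False
    then obtain j' where j': "j' < length r" "j = sh k j'" using sh_surj[OF k j] by auto
    have "r ! j' \<le> h" using o j' by (simp add: okins_def)
    moreover have "r ! j' = h \<Longrightarrow> j' < k"
    proof (rule ccontr)
      assume a: "r ! j' = h" "\<not> j' < k"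
      have "\<forall>j. k \<le> j \<longrightarrow> j < length r \<longrightarrow> r ! j < h" using o by (simp add: okins_def)
      then have "r ! j' < h" using a(2) j'(1) by simp
      then show False using a(1) by simp
    qed
    ultimately have c: "r ! j' < h \<or> (r ! j' = h \<and> sh k j' \<le> k)"
      by (cases "r ! j' = h") (auto simp: sh_def)
    have "dsw (insl k h r) (sh k j') \<le> dsw (insl k h r) k"
    proof (rule dsw_mono)
      show "sh k j' < length (insl k h r)" using k j' by (simp add: sh_def)
      show "k < length (insl k h r)" using k by simp
      show "insl k h r ! sh k j' < insl k h r ! k \<or>
        (insl k h r ! sh k j' = insl k h r ! k \<and> sh k j' \<le> k)"
        using c insl_sh[OF k j'(1), of h] insl_nth_k[OF k, of h] by simp
    qed
    then show ?thesis using dsw_ins_new[OF k] j' by simp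
  qed
qed

lemma add_mset_max_eq:
  fixes t1 t2 :: nat
  assumes "add_mset t1 X1 = add_mset t2 X2" "\<forall>x\<in>#X1. x \<le> t1" "\<forall>x\<in>#X2. x \<le> t2"
  shows "t1 = t2 \<and> X1 = X2"
proof -
  have "t1 = Max (set_mset (add_mset t1 X1))" using assms(2) by (intro Max_eqI[symmetric]) auto
  moreover have "t2 = Max (set_mset (add_mset t2 X2))" using assms(3) by (intro Max_eqI[symmetric]) auto
  ultimately have "t1 = t2" using assms(1) by simp
  then show ?thesis using assms(1) by simp
qed

lemma MSw_ins_max:
  assumes o: "okins r k h"
  shows "\<forall>x\<in>#MSw r. x \<le> FF r h k"
proof -
  have k: "k \<le> length r" and hge: "\<forall>j<length r. r ! j \<le> h" using o by (auto simp: okins_def)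
  have "\<forall>x\<in>#MSw (insl k h r). x \<le> FF r h k"
    using dsw_ins_max[OF o] k by (auto simp: MSw_def)
  then show ?thesis using MSw_ins[OF k hge] by simp
qed

lemma ce:
  assumes dl: "\<forall>j<length r. dsw r j \<le> t" and tn: "t \<le> length r"
  shows "\<exists>k h. okins r k h \<and> FF r h k = t"
proof (cases "r = []")
  case True
  then show ?thesis using tn by (intro exI[of _ 0] exI[of _ 0]) (auto simp: okins_def FF_def)
next
  case False
  define n where "n = length r"
  define m where "m = Max (set r)"
  have mge: "\<And>j. j < n \<Longrightarrow> r ! j \<le> m" using m_def n_def by simp
  have mex: "\<exists>j<n. r ! j = m" using False m_def n_def by (metis Max_in List.finite_set in_set_conv_nth set_empty)
  have FFn: "FF r (Suc m) n = n"
  proof -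
    have "{i. i < length r \<and> (r ! i + 2 \<le> Suc m \<or> (r ! i + 1 = Suc m \<and> i < n))} = {..<n}"
      using mge n_def by fastforce
    then show ?thesis by (simp add: FF_def)
  qed
  show ?thesis
  proof (cases "FF r (Suc m) 0 < t")
    case True
    define k where "k = (LEAST k. t \<le> FF r (Suc m) k)"
    have ex: "t \<le> FF r (Suc m) n" using FFn tn n_def by simp
    have kn: "k \<le> n" using Least_le[of "\<lambda>k. t \<le> FF r (Suc m) k", OF ex] k_def by simp
    have tk: "t \<le> FF r (Suc m) k" using LeastI[of "\<lambda>k. t \<le> FF r (Suc m) k", OF ex] k_def by simp
    have k0: "k \<noteq> 0" using tk True by (cases k) auto
    have tk1: "\<not> t \<le> FF r (Suc m) (k - 1)"
      using not_less_Least[of "k - 1" "\<lambda>k. t \<le> FF r (Suc m) k"] k_def k0 by simp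
    have st: "FF r (Suc m) k = FF r (Suc m) (k - 1) +
        (if k - 1 < length r \<and> r ! (k - 1) + 1 = Suc m then 1 else 0)"
      using FF_Suc[of r "Suc m" "k - 1"] k0 by simp
    then have c: "k - 1 < length r \<and> r ! (k - 1) = m" and ft: "FF r (Suc m) k = t"
      using tk tk1 by (auto split: if_splits)
    have "okins r k (Suc m)"
      unfolding okins_def using kn n_def mge k0 c by (auto simp: le_Suc_eq less_Suc_eq_le)
    then show ?thesis using ft by blast
  next
    case False
    define J where "J = {j. j < n \<and> r ! j = m}"
    have Jfin: "finite J" "J \<noteq> {}" using mex J_def by auto
    define jl where "jl = Max J"
    have jlJ: "jl \<in> J" using Jfin jl_def by simp
    have jlmax: "\<And>j. j \<in> J \<Longrightarrow> j \<le> jl" using Jfin jl_def by simp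
    have jl: "jl < n" "r ! jl = m" using jlJ J_def by auto
    have dsjl: "FF r m jl \<le> t" using dl jl dsw_FF[of jl r] n_def by metis
    have FFjl: "FF r m (Suc jl) = FF r m jl" using FF_Suc[of r m jl] jl by simp
    have FFnm: "FF r m n = FF r (Suc m) 0"
    proof -
      have "{i. i < length r \<and> r ! i + 1 \<le> m} = {i. i < length r \<and> r ! i + 2 \<le> Suc m}" by auto
      then show ?thesis using n_def by (simp add: FF_len FF_0)
    qed
    define P where "P = (\<lambda>k. Suc jl \<le> k \<and> t \<le> FF r m k)"
    define k where "k = (LEAST k. P k)"
    have ex: "P n" using FFnm False jl P_def by simp
    have kn: "k \<le> n" using Least_le[of P, OF ex] k_def by simp
    have Pk: "P k" using LeastI[of P, OF ex] k_def by simp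
    have ft: "FF r m k = t \<and> (0 < k \<longrightarrow> m \<le> r ! (k - 1) + 1)"
    proof (cases "k = Suc jl")
      case True
      then show ?thesis using Pk P_def FFjl dsjl jl by auto
    next
      case False
      then have k1: "Suc jl \<le> k - 1" "k - 1 < k" using Pk P_def by auto
      then have "\<not> P (k - 1)" using not_less_Least[of "k - 1" P] k_def by blast
      then have tk1: "\<not> t \<le> FF r m (k - 1)" using k1 P_def by simp
      have "FF r m k = FF r m (k - 1) +
          (if k - 1 < length r \<and> r ! (k - 1) + 1 = m then 1 else 0)"
        using FF_Suc[of r m "k - 1"] k1 by (metis Suc_diff_1 gr_implies_not0 linorder_neqE_nat)
      then show ?thesis using Pk P_def tk1 by (auto split: if_splits)
    qed
    have later: "\<forall>j. k \<le> j \<longrightarrow> j < length r \<longrightarrow> r ! j < m"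
    proof (intro allI impI)
      fix j assume j: "k \<le> j" "j < length r"
      then have "j \<notin> J" using jlmax Pk P_def by fastforce
      then show "r ! j < m" using mge[of j] j n_def J_def by fastforce
    qed
    have "okins r k m"
      unfolding okins_def using kn n_def mge later ft Pk P_def by auto
    then show ?thesis using ft by blast
  qed
qed

definition ds :: "nat \<Rightarrow> (nat \<Rightarrow> nat \<Rightarrow> bool) \<Rightarrow> nat \<Rightarrow> nat" where
  "ds n R j = card {i\<in>{1..n}. R i j}"

definition MSR :: "nat \<Rightarrow> (nat \<Rightarrow> nat \<Rightarrow> bool) \<Rightarrow> nat multiset" where
  "MSR n R = image_mset (ds n R) (mset_set {1..n})"

definition thr :: "nat \<Rightarrow> (nat \<Rightarrow> nat \<Rightarrow> bool) \<Rightarrow> (nat \<Rightarrow> 'a::linorder) \<Rightarrow> bool" where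
  "thr n R key \<longleftrightarrow> inj_on key {1..n} \<and>
     (\<forall>i\<in>{1..n}. \<forall>i'\<in>{1..n}. \<forall>j\<in>{1..n}. R i j \<and> key i' \<le> key i \<longrightarrow> R i' j) \<and>
     (\<forall>i\<in>{1..n}. \<forall>j\<in>{1..n}. \<forall>j'\<in>{1..n}. R i j \<and> key j \<le> key j' \<longrightarrow> R i j')"

lemma iso_MSR:
  assumes "iso_on n R S" shows "MSR n R = MSR n S"
proof -
  obtain f where f: "bij_betw f {1..n} {1..n}" "\<forall>i\<in>{1..n}. \<forall>j\<in>{1..n}. R i j \<longleftrightarrow> S (f i) (f j)"
    using assms by (auto simp: iso_on_def)
  have inj: "inj_on f {1..n}" using f(1) by (simp add: bij_betw_def)
  have img: "f ` {1..n} = {1..n}" using f(1) by (simp add: bij_betw_def)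
  have dsj: "ds n R j = ds n S (f j)" if j: "j \<in> {1..n}" for j
  proof -
    have "f ` {i\<in>{1..n}. R i j} = {i'\<in>{1..n}. S i' (f j)}"
    proof
      show "f ` {i\<in>{1..n}. R i j} \<subseteq> {i'\<in>{1..n}. S i' (f j)}" using f(2) j img by auto
      show "{i'\<in>{1..n}. S i' (f j)} \<subseteq> f ` {i\<in>{1..n}. R i j}"
      proof
        fix i' assume i': "i' \<in> {i'\<in>{1..n}. S i' (f j)}"
        then obtain i where "i \<in> {1..n}" "i' = f i" using img by (metis (no_types, lifting) imageE mem_Collect_eq)
        then show "i' \<in> f ` {i\<in>{1..n}. R i j}" using i' f(2) j by auto
      qed
    qed
    moreover have "inj_on f {i\<in>{1..n}. R i j}" using inj by (rule inj_on_subset) auto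
    ultimately show ?thesis unfolding ds_def by (metis card_image)
  qed
  have "MSR n R = image_mset (ds n S \<circ> f) (mset_set {1..n})"
    unfolding MSR_def by (rule image_mset_cong) (use dsj in auto)
  also have "\<dots> = image_mset (ds n S) (image_mset f (mset_set {1..n}))"
    by (simp add: image_mset.compositionality)
  also have "image_mset f (mset_set {1..n}) = mset_set {1..n}"
    using image_mset_mset_set[OF inj] img by simp
  finally show ?thesis by (simp add: MSR_def)
qed

lemma canon:
  fixes key :: "nat \<Rightarrow> 'a::linorder"
  assumes t: "thr n R key"
  shows "\<exists>\<sigma> c. bij_betw \<sigma> {1..n} {1..n} \<and> (\<forall>i\<in>{1..n}. \<forall>j\<in>{1..n}. R i j \<longleftrightarrow> \<sigma> i \<le> c (\<sigma> j)) \<and>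
     (\<forall>p\<in>{1..n}. \<forall>q\<in>{1..n}. p \<le> q \<longrightarrow> c p \<le> c q) \<and> MSR n R = image_mset c (mset_set {1..n})"
proof -
  let ?S = "{1..n}"
  have kinj: "inj_on key ?S" and cl: "\<And>i i' j. i \<in> ?S \<Longrightarrow> i' \<in> ?S \<Longrightarrow> j \<in> ?S \<Longrightarrow> R i j \<Longrightarrow> key i' \<le> key i \<Longrightarrow> R i' j"
    and mo: "\<And>i j j'. i \<in> ?S \<Longrightarrow> j \<in> ?S \<Longrightarrow> j' \<in> ?S \<Longrightarrow> R i j \<Longrightarrow> key j \<le> key j' \<Longrightarrow> R i j'"
    using t unfolding thr_def by meson+
  define \<sigma> where "\<sigma> i = card {i'\<in>?S. key i' \<le> key i}" for i
  have r1: "\<sigma> i \<in> ?S" if "i \<in> ?S" for i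
  proof -
    have "i \<in> {i'\<in>?S. key i' \<le> key i}" using that by simp
    moreover have fin: "finite {i'\<in>?S. key i' \<le> key i}" by simp
    ultimately have "card {i'\<in>?S. key i' \<le> key i} > 0" by (auto simp: card_gt_0_iff)
    then have "\<sigma> i \<ge> 1" unfolding \<sigma>_def by simp
    moreover have "card {i'\<in>?S. key i' \<le> key i} \<le> card ?S" by (rule card_mono) auto
    then have "\<sigma> i \<le> n" unfolding \<sigma>_def by simp
    ultimately show ?thesis by simp
  qed
  have r2: "\<sigma> i < \<sigma> j" if "i \<in> ?S" "j \<in> ?S" "key i < key j" for i j
  proof -
    let ?A = "{i'\<in>?S. key i' \<le> key i}" and ?B = "{i'\<in>?S. key i' \<le> key j}"
    have "?A \<subseteq> ?B" using that by auto
    moreover have "j \<in> ?B" "j \<notin> ?A" using that by auto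
    ultimately have "?A \<subset> ?B" by blast
    then show ?thesis unfolding \<sigma>_def by (rule psubset_card_mono[rotated]) simp
  qed
  have r2': "\<sigma> i \<le> \<sigma> j" if "key i \<le> key j" for i j
    unfolding \<sigma>_def by (rule card_mono) (use that in auto)
  have inj: "inj_on \<sigma> ?S"
  proof (rule inj_onI)
    fix i j assume ij: "i \<in> ?S" "j \<in> ?S" "\<sigma> i = \<sigma> j"
    show "i = j"
    proof (rule ccontr)
      assume "i \<noteq> j"
      then have "key i \<noteq> key j" using kinj ij by (meson inj_on_def)
      then consider "key i < key j" | "key j < key i" by (meson linorder_neqE)
      then show False using r2[of i j] r2[of j i] ij by cases auto
    qed
  qed
  have img: "\<sigma> ` ?S = ?S"
  proof (rule card_subset_eq)
    show "finite ?S" by simp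
    show "\<sigma> ` ?S \<subseteq> ?S" using r1 by auto
    show "card (\<sigma> ` ?S) = card ?S" using card_image[OF inj] .
  qed
  have bij: "bij_betw \<sigma> ?S ?S" using inj img by (simp add: bij_betw_def)
  have r5: "R i j \<longleftrightarrow> \<sigma> i \<le> ds n R j" if i: "i \<in> ?S" and j: "j \<in> ?S" for i j
  proof
    assume "R i j"
    then have "{i'\<in>?S. key i' \<le> key i} \<subseteq> {i\<in>?S. R i j}"
    proof (intro subsetI)
      fix x assume "R i j" "x \<in> {i'\<in>?S. key i' \<le> key i}"
      then show "x \<in> {i\<in>?S. R i j}" using cl[of i x j] i j by simp
    qed
    then show "\<sigma> i \<le> ds n R j" unfolding \<sigma>_def ds_def by (rule card_mono[rotated]) simp
  next
    assume le: "\<sigma> i \<le> ds n R j"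
    show "R i j"
    proof (rule ccontr)
      assume nR: "\<not> R i j"
      have "{i\<in>?S. R i j} \<subseteq> {i'\<in>?S. key i' < key i}"
      proof
        fix i' assume i': "i' \<in> {i\<in>?S. R i j}"
        have "\<not> key i \<le> key i'"
        proof
          assume "key i \<le> key i'"
          then have "R i j" using cl[of i' i j] i' i j by auto
          then show False using nR by simp
        qed
        then show "i' \<in> {i'\<in>?S. key i' < key i}" using i' by auto
      qed
      then have "ds n R j \<le> card {i'\<in>?S. key i' < key i}" unfolding ds_def
        by (rule card_mono[rotated]) simp
      moreover have "{i'\<in>?S. key i' \<le> key i} = insert i {i'\<in>?S. key i' < key i}"
      proof (intro equalityI subsetI)
        fix x assume x: "x \<in> {i'\<in>?S. key i' \<le> key i}"
        show "x \<in> insert i {i'\<in>?S. key i' < key i}"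
        proof (cases "x = i")
          case False
          have xS: "x \<in> ?S" and kx: "key x \<le> key i" using x by simp_all
          have "key x \<noteq> key i"
          proof
            assume "key x = key i"
            then have "x = i" using inj_onD[OF kinj _ xS i] by simp
            then show False using False by simp
          qed
          then have "key x < key i" using kx by (simp add: order_le_neq_trans)
          then show ?thesis using xS by simp
        qed simp
      next
        fix x assume x: "x \<in> insert i {i'\<in>?S. key i' < key i}"
        then show "x \<in> {i'\<in>?S. key i' \<le> key i}"
        proof
          assume "x = i" then show ?thesis using i by simp
        next
          assume "x \<in> {i'\<in>?S. key i' < key i}"
          then show ?thesis by (simp add: less_imp_le)
        qed
      qed
      then have "\<sigma> i = Suc (card {i'\<in>?S. key i' < key i})" unfolding \<sigma>_def by simp
      ultimately show False using le by simp
    qed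
  qed
  define c where "c p = ds n R (inv_into ?S \<sigma> p)" for p
  have cs: "c (\<sigma> j) = ds n R j" if "j \<in> ?S" for j
    using inv_into_f_f[OF inj that] c_def by simp
  have A: "\<forall>i\<in>?S. \<forall>j\<in>?S. R i j \<longleftrightarrow> \<sigma> i \<le> c (\<sigma> j)"
  proof (intro ballI)
    fix i j assume i: "i \<in> ?S" and j: "j \<in> ?S"
    have "R i j \<longleftrightarrow> \<sigma> i \<le> ds n R j" by (rule r5[OF i j])
    also have "ds n R j = c (\<sigma> j)" using cs[OF j] by simp
    finally show "R i j \<longleftrightarrow> \<sigma> i \<le> c (\<sigma> j)" .
  qed
  have B: "\<forall>p\<in>?S. \<forall>q\<in>?S. p \<le> q \<longrightarrow> c p \<le> c q"
  proof (intro ballI impI)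
    fix p q assume p: "p \<in> ?S" and q: "q \<in> ?S" and pq: "p \<le> q"
    obtain jp where jp: "jp \<in> ?S" "p = \<sigma> jp" using p img by (metis imageE)
    obtain jq where jq: "jq \<in> ?S" "q = \<sigma> jq" using q img by (metis imageE)
    have "key jp \<le> key jq"
    proof (rule ccontr)
      assume "\<not> key jp \<le> key jq"
      then have "key jq < key jp" by simp
      then have "\<sigma> jq < \<sigma> jp" using r2 jp jq by simp
      then show False using pq jp jq by simp
    qed
    then have "{i\<in>?S. R i jp} \<subseteq> {i\<in>?S. R i jq}"
    proof (intro subsetI)
      fix x assume "key jp \<le> key jq" "x \<in> {i\<in>?S. R i jp}"
      then show "x \<in> {i\<in>?S. R i jq}" using mo[of x jp jq] jp jq by simp
    qed
    then have "ds n R jp \<le> ds n R jq" unfolding ds_def by (rule card_mono[rotated]) simp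
    then show "c p \<le> c q" using cs jp jq by simp
  qed
  have "MSR n R = image_mset (c \<circ> \<sigma>) (mset_set ?S)"
    unfolding MSR_def by (rule image_mset_cong) (use cs in auto)
  also have "\<dots> = image_mset c (image_mset \<sigma> (mset_set ?S))"
    by (simp add: image_mset.compositionality)
  also have "image_mset \<sigma> (mset_set ?S) = mset_set ?S"
    using image_mset_mset_set[OF inj] img by simp
  finally have C: "MSR n R = image_mset c (mset_set ?S)" .
  show ?thesis using bij A B C by blast
qed

lemma mono_mset_eq:
  fixes n :: nat
  assumes "image_mset c1 (mset_set {1..n}) = image_mset c2 (mset_set {1..n})"
    "\<forall>p\<in>{1..n}. \<forall>q\<in>{1..n}. p \<le> q \<longrightarrow> c1 p \<le> (c1 q :: nat)"
    "\<forall>p\<in>{1..n}. \<forall>q\<in>{1..n}. p \<le> q \<longrightarrow> c2 p \<le> (c2 q :: nat)"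
  shows "\<forall>p\<in>{1..n}. c1 p = c2 p"
proof -
  let ?L = "[1..<Suc n]"
  have sl: "set ?L = {1..n}" by auto
  have e: "mset_set {1..n} = mset ?L" using mset_upt atLeastLessThanSuc_atLeastAtMost by metis
  have ms: "mset (map c1 ?L) = mset (map c2 ?L)"
    using assms(1) unfolding e by simp
  have so: "sorted (map c ?L)" if "\<forall>p\<in>{1..n}. \<forall>q\<in>{1..n}. p \<le> q \<longrightarrow> c p \<le> (c q :: nat)" for c
    unfolding sorted_map
    by (rule sorted_wrt_mono_rel[OF _ sorted_wrt_upt]) (use that sl in auto)
  have "map c1 ?L = map c2 ?L"
    using properties_for_sort[OF ms so[OF assms(2)]] sorted_sort_id[OF so[OF assms(3)]]
    by simp
  then have "\<forall>p\<in>set ?L. c1 p = c2 p" by (simp only: map_eq_conv)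
  then show ?thesis unfolding sl .
qed

lemma thr_iso:
  fixes k1 :: "nat \<Rightarrow> 'a::linorder" and k2 :: "nat \<Rightarrow> 'b::linorder"
  assumes "thr n R k1" "thr n S k2" "MSR n R = MSR n S"
  shows "iso_on n R S"
proof -
  obtain \<sigma>1 c1 where 1: "bij_betw \<sigma>1 {1..n} {1..n}" "\<forall>i\<in>{1..n}. \<forall>j\<in>{1..n}. R i j \<longleftrightarrow> \<sigma>1 i \<le> c1 (\<sigma>1 j)"
     "\<forall>p\<in>{1..n}. \<forall>q\<in>{1..n}. p \<le> q \<longrightarrow> c1 p \<le> c1 q" "MSR n R = image_mset c1 (mset_set {1..n})"
    using canon[OF assms(1)] by blast
  obtain \<sigma>2 c2 where 2: "bij_betw \<sigma>2 {1..n} {1..n}" "\<forall>i\<in>{1..n}. \<forall>j\<in>{1..n}. S i j \<longleftrightarrow> \<sigma>2 i \<le> c2 (\<sigma>2 j)"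
     "\<forall>p\<in>{1..n}. \<forall>q\<in>{1..n}. p \<le> q \<longrightarrow> c2 p \<le> c2 q" "MSR n S = image_mset c2 (mset_set {1..n})"
    using canon[OF assms(2)] by blast
  have ceq: "\<forall>p\<in>{1..n}. c1 p = c2 p" using mono_mset_eq[OF _ 1(3) 2(3)] 1(4) 2(4) assms(3) by simp
  define f where "f = inv_into {1..n} \<sigma>2 \<circ> \<sigma>1"
  have bf: "bij_betw f {1..n} {1..n}" unfolding f_def
    by (rule bij_betw_trans[OF 1(1) bij_betw_inv_into[OF 2(1)]])
  have sf: "\<sigma>2 (f i) = \<sigma>1 i" if "i \<in> {1..n}" for i
  proof -
    have "\<sigma>1 i \<in> {1..n}" using 1(1) that by (meson bij_betwE)
    then have "\<sigma>1 i \<in> \<sigma>2 ` {1..n}" using 2(1) by (simp add: bij_betw_def)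
    then show ?thesis unfolding f_def by (simp add: f_inv_into_f)
  qed
  have fin: "f i \<in> {1..n}" if "i \<in> {1..n}" for i using bf that by (meson bij_betwE)
  show ?thesis unfolding iso_on_def
  proof (intro exI[of _ f] conjI ballI)
    show "bij_betw f {1..n} {1..n}" by (rule bf)
    fix i j assume i: "i \<in> {1..n}" and j: "j \<in> {1..n}"
    have "R i j \<longleftrightarrow> \<sigma>1 i \<le> c1 (\<sigma>1 j)" using 1(2) i j by blast
    also have "\<dots> \<longleftrightarrow> \<sigma>2 (f i) \<le> c2 (\<sigma>2 (f j))"
      using sf[OF i] sf[OF j] ceq 1(1) j by (metis bij_betwE)
    also have "\<dots> \<longleftrightarrow> S (f i) (f j)" using 2(2) fin[OF i] fin[OF j] by blast
    finally show "R i j \<longleftrightarrow> S (f i) (f j)" .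
  qed
qed

lemma Pw_Suc:
  assumes "length w = n"
  shows "Pw w (Suc i) (Suc j) \<longleftrightarrow> P0 w i j"
  using assms unfolding Pw_def P0_def by auto

lemma Suc_img: "Suc ` {..<n} = {1..n}"
proof (intro equalityI subsetI)
  fix x assume "x \<in> {1..n}"
  then have "x = Suc (x - 1)" "x - 1 < n" by auto
  then show "x \<in> Suc ` {..<n}" by blast
qed auto

lemma MSR_Pw:
  assumes "length w = n"
  shows "MSR n (Pw w) = MSw w"
proof -
  have dsj: "ds n (Pw w) (Suc j) = dsw w j" for j
  proof -
    have "{i\<in>{1..n}. Pw w i (Suc j)} = Suc ` {i. P0 w i j}"
    proof (intro equalityI subsetI)
      fix x assume x: "x \<in> {i\<in>{1..n}. Pw w i (Suc j)}"
      then have "x = Suc (x - 1)" by auto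
      then show "x \<in> Suc ` {i. P0 w i j}" using x Pw_Suc[OF assms, of "x - 1" j] by (metis imageI mem_Collect_eq)
    next
      fix x assume "x \<in> Suc ` {i. P0 w i j}"
      then obtain i where "P0 w i j" "x = Suc i" by auto
      then show "x \<in> {i\<in>{1..n}. Pw w i (Suc j)}" using Pw_Suc[OF assms, of i j] assms
        by (auto simp: P0_def)
    qed
    then show ?thesis unfolding ds_def dsw_def by (simp add: card_image)
  qed
  have "mset_set {1..n} = image_mset Suc (mset_set {..<n})"
    using image_mset_mset_set[of Suc "{..<n}"] Suc_img by simp
  then have "MSR n (Pw w) = image_mset (ds n (Pw w) \<circ> Suc) (mset_set {..<n})"
    unfolding MSR_def by (simp add: image_mset.compositionality)
  also have "\<dots> = MSw w" unfolding MSw_def using assms dsj by (simp add: comp_def)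
  finally show ?thesis .
qed

lemma thr_Pw:
  assumes "length w = n"
  shows "thr n (Pw w) (\<lambda>i. (w ! (i - 1), i))"
  unfolding thr_def
proof (intro conjI ballI impI)
  show "inj_on (\<lambda>i. (w ! (i - 1), i)) {1..n}" by (auto simp: inj_on_def)
next
  fix i i' j assume "i \<in> {1..n}" "i' \<in> {1..n}" "j \<in> {1..n}"
    "Pw w i j \<and> (w ! (i' - 1), i') \<le> (w ! (i - 1), i)"
  then show "Pw w i' j" using assms unfolding Pw_def less_eq_prod_def by auto
next
  fix i j j' assume "i \<in> {1..n}" "j \<in> {1..n}" "j' \<in> {1..n}"
    "Pw w i j \<and> (w ! (j - 1), j) \<le> (w ! (j' - 1), j')"
  then show "Pw w i j'" using assms unfolding Pw_def less_eq_prod_def by auto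
qed

lemma thr_uio:
  assumes s: "\<forall>i j. 1 \<le> i \<longrightarrow> i \<le> j \<longrightarrow> j \<le> n \<longrightarrow> x i \<le> x j"
  shows "thr n (uio x n) (\<lambda>i. i)"
  unfolding thr_def
proof (intro conjI ballI impI)
  show "inj_on (\<lambda>i. i) {1..n}" by simp
next
  fix i i' j assume a: "i \<in> {1..n}" "i' \<in> {1..n}" "j \<in> {1..n}" "uio x n i j \<and> i' \<le> i"
  then have "x i' \<le> x i" using s by simp
  then show "uio x n i' j" using a by (auto simp: uio_def)
next
  fix i j j' assume a: "i \<in> {1..n}" "j \<in> {1..n}" "j' \<in> {1..n}" "uio x n i j \<and> j \<le> j'"
  then have "x j \<le> x j'" using s by simp
  then show "uio x n i j'" using a by (auto simp: uio_def)
qed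

lemma MSR_uio_Suc:
  assumes s: "\<forall>i j. 1 \<le> i \<longrightarrow> i \<le> j \<longrightarrow> j \<le> Suc n \<longrightarrow> x i \<le> x j"
  defines "t \<equiv> ds (Suc n) (uio x (Suc n)) (Suc n)"
  shows "MSR (Suc n) (uio x (Suc n)) = add_mset t (MSR n (uio x n))"
    and "t \<le> n" and "\<forall>y\<in>#MSR n (uio x n). y \<le> t"
proof -
  have eqj: "{i\<in>{1..Suc n}. uio x (Suc n) i j} = {i\<in>{1..n}. uio x n i j}" if j: "j \<in> {1..n}" for j
  proof (intro equalityI subsetI)
    fix i assume i: "i \<in> {i\<in>{1..Suc n}. uio x (Suc n) i j}"
    have "i \<noteq> Suc n"
    proof
      assume "i = Suc n"
      then have "x (Suc n) + 1 < x j" using i by (simp add: uio_def)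
      moreover have "x j \<le> x (Suc n)" using s j by simp
      ultimately show False by simp
    qed
    then show "i \<in> {i\<in>{1..n}. uio x n i j}" using i j by (auto simp: uio_def)
  qed (use that in \<open>auto simp: uio_def\<close>)
  have dsj: "ds (Suc n) (uio x (Suc n)) j = ds n (uio x n) j" if "j \<in> {1..n}" for j
    using eqj[OF that] by (simp add: ds_def)
  have ms: "mset_set {1..Suc n} = add_mset (Suc n) (mset_set {1..n})"
  proof -
    have "{1..Suc n} = insert (Suc n) {1..n}" by auto
    then show ?thesis by simp
  qed
  show "MSR (Suc n) (uio x (Suc n)) = add_mset t (MSR n (uio x n))"
  proof -
    have "image_mset (ds (Suc n) (uio x (Suc n))) (mset_set {1..n}) = image_mset (ds n (uio x n)) (mset_set {1..n})"
      by (rule image_mset_cong) (use dsj in simp)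
    then show ?thesis unfolding MSR_def ms t_def by simp
  qed
  have tsub: "{i\<in>{1..Suc n}. uio x (Suc n) i (Suc n)} \<subseteq> {1..n}"
  proof
    fix i assume "i \<in> {i\<in>{1..Suc n}. uio x (Suc n) i (Suc n)}"
    then show "i \<in> {1..n}" by (cases "i = Suc n") (auto simp: uio_def)
  qed
  then show "t \<le> n" unfolding t_def ds_def using card_mono[OF _ tsub] by simp
  show "\<forall>y\<in>#MSR n (uio x n). y \<le> t"
  proof
    fix y assume "y \<in># MSR n (uio x n)"
    then obtain j where j: "j \<in> {1..n}" "y = ds n (uio x n) j" by (auto simp: MSR_def)
    have "{i\<in>{1..n}. uio x n i j} \<subseteq> {i\<in>{1..Suc n}. uio x (Suc n) i (Suc n)}"
    proof
      fix i assume i: "i \<in> {i\<in>{1..n}. uio x n i j}"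
      have "x j \<le> x (Suc n)" using s j by simp
      then show "i \<in> {i\<in>{1..Suc n}. uio x (Suc n) i (Suc n)}" using i by (auto simp: uio_def)
    qed
    then show "y \<le> t" unfolding j(2) t_def ds_def by (rule card_mono[rotated]) simp
  qed
qed

lemma step_lemma:
  assumes dy: "dyck n e" and iso: "iso_on n (Pw (area e)) (uio x n)"
    and s: "\<forall>i j. 1 \<le> i \<longrightarrow> i \<le> j \<longrightarrow> j \<le> Suc n \<longrightarrow> x i \<le> x j"
  shows "\<exists>u v. e = u @ v \<and> dyck (Suc n) (u @ [A,B] @ v) \<and>
     iso_on (Suc n) (Pw (area (u @ [A,B] @ v))) (uio x (Suc n)) \<and>
     is_final_max_peak (u @ [A,B] @ v) (length u)"
proof -
  define r where "r = area e"
  have lr: "length r = n" using length_area_dyck[OF dy] r_def by simp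
  define t where "t = ds (Suc n) (uio x (Suc n)) (Suc n)"
  have U1: "MSR (Suc n) (uio x (Suc n)) = add_mset t (MSR n (uio x n))"
    and tn: "t \<le> n" and tmax: "\<forall>y\<in>#MSR n (uio x n). y \<le> t"
    using MSR_uio_Suc[OF s] t_def by simp_all
  have msr: "MSw r = MSR n (uio x n)"
    using iso_MSR[OF iso] MSR_Pw[OF lr] r_def by simp
  have dl: "\<forall>j<length r. dsw r j \<le> t"
  proof (intro allI impI)
    fix j assume "j < length r"
    then have "dsw r j \<in># MSw r" by (simp add: MSw_def)
    then show "dsw r j \<le> t" using msr tmax by simp
  qed
  obtain k h where o: "okins r k h" and ft: "FF r h k = t"
    using ce[OF dl] tn lr by auto
  have kn: "k \<le> n" and hge: "\<forall>j<n. r ! j \<le> h" and later: "\<forall>j. k \<le> j \<longrightarrow> j < n \<longrightarrow> r ! j < h"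
    and k0: "k = 0 \<longrightarrow> h = 0" and kp: "0 < k \<longrightarrow> h \<le> r ! (k - 1) + 1"
    using o lr unfolding okins_def by auto
  obtain p where p: "p \<le> length e" "cntA (take p e) = k" "diag_level e p = int h"
    using path_pos_exists[OF dy kn] k0 kp hge r_def by auto
  define u where "u = take p e"
  define v where "v = drop p e"
  have lu: "length u = p" using p(1) u_def by simp
  have dy': "dyck (Suc n) (u @ [A,B] @ v)" using dyck_ins[OF dy p(1)] u_def v_def by simp
  have fp: "is_final_max_peak (u @ [A,B] @ v) (length u)"
    using final_peak_ins[OF dy p(1) p(3) p(2)[symmetric]] hge later r_def u_def v_def lu by simp
  have hh: "cntA (take p e) - cntB (take p e) = h" using p(3) by (simp add: diag_level_def)
  have ad: "area (u @ [A,B] @ v) = insl k h r"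
    using area_ins[of p e] u_def v_def p(2) hh r_def by simp
  have "MSw (insl k h r) = add_mset t (MSw r)"
    using MSw_ins[of k r h] kn lr hge ft by simp
  then have "MSR (Suc n) (Pw (area (u @ [A,B] @ v))) = MSR (Suc n) (uio x (Suc n))"
    using MSR_Pw[of "insl k h r" "Suc n"] ad kn lr U1 msr by simp
  moreover have "thr (Suc n) (Pw (area (u @ [A,B] @ v))) (\<lambda>i. (area (u @ [A,B] @ v) ! (i - 1), i))"
    by (rule thr_Pw) (use length_area_dyck[OF dy'] in simp)
  moreover have "thr (Suc n) (uio x (Suc n)) (\<lambda>i. i)" by (rule thr_uio[OF s])
  ultimately have "iso_on (Suc n) (Pw (area (u @ [A,B] @ v))) (uio x (Suc n))"
    by (rule thr_iso[rotated 2])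
  moreover have "e = u @ v" using u_def v_def by simp
  ultimately show ?thesis using dy' fp by blast
qed

lemma exists_path:
  "\<forall>i j. 1 \<le> i \<longrightarrow> i \<le> j \<longrightarrow> j \<le> n \<longrightarrow> x i \<le> x j \<Longrightarrow>
   \<exists>d. dyck n d \<and> iso_on n (Pw (area d)) (uio x n)"
proof (induction n)
  case 0
  have "dyck 0 []" by (simp add: dyck_def)
  moreover have "iso_on 0 (Pw (area [])) (uio x 0)"
    unfolding iso_on_def by (intro exI[of _ id]) auto
  ultimately show ?case by blast
next
  case (Suc n)
  then have "\<forall>i j. 1 \<le> i \<longrightarrow> i \<le> j \<longrightarrow> j \<le> n \<longrightarrow> x i \<le> x j" by simp
  then obtain e where "dyck n e" "iso_on n (Pw (area e)) (uio x n)" using Suc.IH by blast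
  then show ?case using step_lemma[of n e x] Suc.prems by blast
qed

lemma okins_removal:
  assumes dy: "dyck (Suc n) d" and dye: "dyck n e" and ad: "area d = insl k h (area e)"
    and kn: "k \<le> n" and hge: "\<forall>j<n. area e ! j \<le> h"
    and later: "\<forall>j. k \<le> j \<longrightarrow> j < n \<longrightarrow> area e ! j < h"
  shows "okins (area e) k h"
proof -
  have le: "length (area e) = n" using length_area_dyck[OF dye] .
  have hk: "area d ! k = h" using ad kn le by simp
  have k0: "k = 0 \<longrightarrow> h = 0" using area_dyck_0[OF dy] hk by auto
  have kp: "0 < k \<longrightarrow> h \<le> area e ! (k - 1) + 1"
  proof
    assume k: "0 < k"
    have "area d ! Suc (k - 1) \<le> area d ! (k - 1) + 1"
      by (rule area_dyck_step[OF dy]) (use k kn in simp)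
    moreover have "area d ! (k - 1) = area e ! (k - 1)" using ad kn le k insl_nth_lt by simp
    ultimately show "h \<le> area e ! (k - 1) + 1" using k hk by simp
  qed
  show ?thesis unfolding okins_def using le kn hge later k0 kp by simp
qed

lemma uniq_path:
  "dyck n d1 \<Longrightarrow> dyck n d2 \<Longrightarrow> MSw (area d1) = MSw (area d2) \<Longrightarrow> d1 = d2"
proof (induction n arbitrary: d1 d2)
  case 0
  then show ?case using dyck_len[of 0 d1] dyck_len[of 0 d2] by simp
next
  case (Suc n)
  obtain p1 e1 k1 h1 where r1: "p1 \<le> length e1" "dyck n e1" "d1 = take p1 e1 @ [A,B] @ drop p1 e1"
    "area d1 = insl k1 h1 (area e1)" "k1 \<le> n" "\<forall>j<n. area e1 ! j \<le> h1"
    "\<forall>j. k1 \<le> j \<longrightarrow> j < n \<longrightarrow> area e1 ! j < h1"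
    using removal[OF Suc.prems(1)] by blast
  obtain p2 e2 k2 h2 where r2: "p2 \<le> length e2" "dyck n e2" "d2 = take p2 e2 @ [A,B] @ drop p2 e2"
    "area d2 = insl k2 h2 (area e2)" "k2 \<le> n" "\<forall>j<n. area e2 ! j \<le> h2"
    "\<forall>j. k2 \<le> j \<longrightarrow> j < n \<longrightarrow> area e2 ! j < h2"
    using removal[OF Suc.prems(2)] by blast
  have o1: "okins (area e1) k1 h1" by (rule okins_removal[OF Suc.prems(1) r1(2,4,5,6,7)])
  have o2: "okins (area e2) k2 h2" by (rule okins_removal[OF Suc.prems(2) r2(2,4,5,6,7)])
  have l1: "length (area e1) = n" and l2: "length (area e2) = n"
    using length_area_dyck r1(2) r2(2) by auto
  have m1: "MSw (area d1) = add_mset (FF (area e1) h1 k1) (MSw (area e1))"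
    using MSw_ins[of k1 "area e1" h1] r1 l1 by simp
  have m2: "MSw (area d2) = add_mset (FF (area e2) h2 k2) (MSw (area e2))"
    using MSw_ins[of k2 "area e2" h2] r2 l2 by simp
  have "FF (area e1) h1 k1 = FF (area e2) h2 k2 \<and> MSw (area e1) = MSw (area e2)"
    by (rule add_mset_max_eq) (use m1 m2 Suc.prems(3) MSw_ins_max[OF o1] MSw_ins_max[OF o2] in auto)
  then have ff: "FF (area e1) h1 k1 = FF (area e2) h2 k2" and me: "MSw (area e1) = MSw (area e2)"
    by auto
  have ee: "e1 = e2" using Suc.IH[OF r1(2) r2(2) me] .
  have "k1 = k2 \<and> h1 = h2" using okins_uniq[OF o1 o2[unfolded ee[symmetric]]] ff ee by simp
  then have "area d1 = area d2" using r1(4) r2(4) ee by simp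
  then show ?case by (rule area_inj[OF Suc.prems(1,2)])
qed

lemma pU_eq:
  assumes "dyck n e" "iso_on n (Pw (area e)) U"
  shows "pU n U = e"
  unfolding pU_def
proof (rule the_equality)
  show "dyck n e \<and> iso_on n (Pw (area e)) U" using assms by simp
  fix d assume d: "dyck n d \<and> iso_on n (Pw (area d)) U"
  have "MSR n (Pw (area d)) = MSR n (Pw (area e))"
    using iso_MSR[of n "Pw (area d)" U] iso_MSR[of n "Pw (area e)" U] d assms by simp
  then have "MSw (area d) = MSw (area e)"
    using MSR_Pw[OF length_area_dyck[OF assms(1)]] MSR_Pw[OF length_area_dyck[of n d]] d by simp
  then show "d = e" using uniq_path[of n d e] d assms by simp
qed

theorem mainTheorem7:
  fixes n :: nat and x :: "nat \<Rightarrow> real"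
  assumes "\<forall>i j. 1 \<le> i \<longrightarrow> i \<le> j \<longrightarrow> j \<le> Suc n \<longrightarrow> x i \<le> x j"
  shows "add_final_max_peak (pU n (uio x n)) (pU (Suc n) (uio x (Suc n)))"
proof -
  have "\<forall>i j. 1 \<le> i \<longrightarrow> i \<le> j \<longrightarrow> j \<le> n \<longrightarrow> x i \<le> x j" using assms by simp
  then obtain e where e: "dyck n e" "iso_on n (Pw (area e)) (uio x n)" using exists_path by blast
  obtain u v where uv: "e = u @ v" "dyck (Suc n) (u @ [A,B] @ v)"
     "iso_on (Suc n) (Pw (area (u @ [A,B] @ v))) (uio x (Suc n))"
     "is_final_max_peak (u @ [A,B] @ v) (length u)"
    using step_lemma[OF e assms] by blast
  have 1: "pU n (uio x n) = e" by (rule pU_eq[OF e])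
  have 2: "pU (Suc n) (uio x (Suc n)) = u @ [A,B] @ v" by (rule pU_eq[OF uv(2,3)])
  show ?thesis unfolding 1 2 add_final_max_peak_def using uv by blast
qed

end
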